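(* The Hasse index of order 2 of the class of Dyck lattices is asymptotically Boolean, i.e. $i_2(\mathcal{D}_n)=\frac{sc_2(\mathcal{D}_n)}{|\mathcal{D}_n|}\sim\frac{n^2}{4}$ as $n\to\infty$.
   Context: A Dyck path of semilength $n$ is a lattice path from $(0,0)$ to $(2n,0)$ with steps $(1,1)$ and $(1,-1)$ never going below the $x$-axis. $\mathcal{D}_n$ is the set of Dyck paths of semilength $n$ ordered by containment: $\gamma\le\gamma'$ iff $\gamma$ lies weakly below $\gamma'$. A saturated chain of length $h$ is a sequence $\gamma^{(0)}<\cdots<\gamma^{(h)}$ in which each element covers the previous one; $sc_h(\mathcal{P})$ is the number of saturated chains of length $h$ in a poset $\mathcal{P}$, and the Hasse index of order $h$ is $i_h(\mathcal{P})=sc_h(\mathcal{P})/|\mathcal{P}|$. A sequence of posets $(\mathcal{P}_n)$ has asymptotically Boolean Hasse index of order $h$ if $i_h(\mathcal{P}_n)\sim n^h/2^h$. *)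

theory Defs
  imports Complex_Main "HOL-Library.Landau_Symbols"
begin

text \<open>A lattice path is a list of steps: True = up step (1,1), False = down step (1,-1).\<close>

definition step_val :: "bool \<Rightarrow> int" where
  "step_val b = (if b then 1 else -1)"

definition height :: "bool list \<Rightarrow> int" where
  "height w = sum_list (map step_val w)"

definition dyck_paths :: "nat \<Rightarrow> bool list set" where
  "dyck_paths n = {w. length w = 2 * n \<and> (\<forall>k \<le> length w. height (take k w) \<ge> 0) \<and> height w = 0}"

definition dyck_le :: "bool list \<Rightarrow> bool list \<Rightarrow> bool" where
  "dyck_le w v = (\<forall>k \<le> length w. height (take k w) \<le> height (take k v))"

definition poset_less :: "'a set \<Rightarrow> ('a \<Rightarrow> 'a \<Rightarrow> bool) \<Rightarrow> 'a \<Rightarrow> 'a \<Rightarrow> bool" where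
  "poset_less P le x y = (x \<in> P \<and> y \<in> P \<and> le x y \<and> x \<noteq> y)"

definition covers :: "'a set \<Rightarrow> ('a \<Rightarrow> 'a \<Rightarrow> bool) \<Rightarrow> 'a \<Rightarrow> 'a \<Rightarrow> bool" where
  "covers P le x y = (poset_less P le x y \<and> \<not> (\<exists>z \<in> P. poset_less P le x z \<and> poset_less P le z y))"

definition saturated_chains :: "'a set \<Rightarrow> ('a \<Rightarrow> 'a \<Rightarrow> bool) \<Rightarrow> nat \<Rightarrow> 'a list set" where
  "saturated_chains P le h =
     {c. length c = Suc h \<and> set c \<subseteq> P \<and> (\<forall>i < h. covers P le (c ! i) (c ! Suc i))}"

definition sc :: "'a set \<Rightarrow> ('a \<Rightarrow> 'a \<Rightarrow> bool) \<Rightarrow> nat \<Rightarrow> nat" where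
  "sc P le h = card (saturated_chains P le h)"

definition hasse_index :: "'a set \<Rightarrow> ('a \<Rightarrow> 'a \<Rightarrow> bool) \<Rightarrow> nat \<Rightarrow> real" where
  "hasse_index P le h = real (sc P le h) / real (card P)"

end

theory Submission
  imports Defs "HOL-Real_Asymp.Real_Asymp"
begin


lemma height_Nil[simp]: "height [] = 0" by (simp add: height_def)
lemma height_Cons[simp]: "height (b # xs) = (if b then 1 else -1) + height xs"
  by (simp add: height_def step_val_def)
lemma height_append[simp]: "height (xs @ ys) = height xs + height ys"
  by (simp add: height_def)

lemma height_take_append:
  "height (take k (xs @ ys)) = (if k \<le> length xs then height (take k xs) else height xs + height (take (k - length xs) ys))"
  by (simp add: take_append)

lemma height_take_Suc: "k < length w \<Longrightarrow> height (take (Suc k) w) = height (take k w) + (if w!k then 1 else -1)"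
  by (simp add: take_Suc_conv_app_nth)

lemma eq_by_heights:
  assumes "length u = length v" "\<forall>k\<le>length u. height (take k u) = height (take k v)"
  shows "u = v"
proof (rule nth_equalityI)
  show "length u = length v" by fact
  fix k assume k: "k < length u"
  then have "height (take (Suc k) u) = height (take (Suc k) v)" "height (take k u) = height (take k v)"
    using assms by auto
  moreover have "height (take (Suc k) u) = height (take k u) + (if u!k then 1 else -1)"
    using height_take_Suc[of k u] k by simp
  moreover have "height (take (Suc k) v) = height (take k v) + (if v!k then 1 else -1)"
    using height_take_Suc[of k v] k assms(1) by simp
  ultimately have "(if u!k then 1 else -1) = (if v!k then (1::int) else -1)" by linarith
  then show "u!k = v!k" by (auto split: if_splits)
qed

lemma height_cnt: "height w = 2 * int (length (filter id w)) - int (length w)"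
  by (induction w) auto

lemma height_take_sum:
  assumes "k \<le> j" "j \<le> length w"
  shows "height (take j w) = height (take k w) + (\<Sum>t=k..<j. step_val (w!t))"
  using assms
proof (induction j rule: dec_induct)
  case base then show ?case by simp
next
  case (step j)
  have "height (take (Suc j) w) = height (take j w) + step_val (w!j)"
    using height_take_Suc[of j w] step.prems by (simp add: step_val_def)
  moreover have "(\<Sum>t=k..<Suc j. step_val (w!t)) = (\<Sum>t=k..<j. step_val (w!t)) + step_val (w!j)"
    using step.hyps(1) by (rule sum.atLeastLessThan_Suc)
  ultimately show ?case using step.IH step.prems by linarith
qed

fun tc :: "bool \<Rightarrow> bool \<Rightarrow> bool list \<Rightarrow> nat" where
  "tc a b (x # y # w) = (if x = a \<and> y = b then 1 else 0) + tc a b (y # w)"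
| "tc a b _ = 0"

lemma tc_Cons: "tc a b (x # w) = (if w \<noteq> [] \<and> x = a \<and> hd w = b then 1 else 0) + tc a b w"
  by (cases w) auto

lemma tc_append:
  "tc a b (xs @ ys) = tc a b xs + tc a b ys + (if xs \<noteq> [] \<and> ys \<noteq> [] \<and> last xs = a \<and> hd ys = b then 1 else 0)"
  by (induction xs) (auto simp: tc_Cons)

definition TS :: "bool \<Rightarrow> bool \<Rightarrow> bool list \<Rightarrow> nat set" where
  "TS a b w = {i. Suc i < length w \<and> w!i = a \<and> w!Suc i = b}"

lemma finite_TS[simp]: "finite (TS a b w)"
  by (rule finite_subset[of _ "{..<length w}"]) (auto simp: TS_def)

lemma card_TS: "card (TS a b w) = tc a b w"
proof (induction a b w rule: tc.induct)
  case (1 a b x y w)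
  have eq: "TS a b (x # y # w) = (if x = a \<and> y = b then {0} else {}) \<union> Suc ` TS a b (y # w)"
  proof (intro set_eqI iffI)
    fix i assume "i \<in> TS a b (x # y # w)"
    then show "i \<in> (if x = a \<and> y = b then {0} else {}) \<union> Suc ` TS a b (y # w)"
      by (cases i) (auto simp: TS_def)
  next
    fix i assume "i \<in> (if x = a \<and> y = b then {0} else {}) \<union> Suc ` TS a b (y # w)"
    then show "i \<in> TS a b (x # y # w)"
      by (auto simp: TS_def split: if_splits)
  qed
  have ci: "card (Suc ` TS a b (y # w)) = card (TS a b (y # w))" by (rule card_image) auto
  show ?case
  proof (cases "x = a \<and> y = b")
    case True
    then have "TS a b (x # y # w) = insert 0 (Suc ` TS a b (y # w))" using eq[unfolded if_P[OF True]] by simp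
    then have "card (TS a b (x # y # w)) = Suc (card (TS a b (y # w)))" using ci by (simp add: image_iff)
    then show ?thesis using 1 True by simp
  next
    case False
    then have "TS a b (x # y # w) = Suc ` TS a b (y # w)" using eq[unfolded if_not_P[OF False]] by simp
    then show ?thesis using 1 False ci by simp
  qed
next
  case ("2_1" a b) then show ?case by (simp add: TS_def)
next
  case ("2_2" a b v) then show ?case by (simp add: TS_def)
qed

lemma tc_diff: "w \<noteq> [] \<Longrightarrow> int (tc True False w) - int (tc False True w) = (if hd w then 1 else 0) - (if last w then 1 else 0)"
  by (induction True False w rule: tc.induct) (auto simp: tc_Cons)



definition flip :: "bool list \<Rightarrow> nat \<Rightarrow> bool list" where
  "flip a i = take i a @ True # False # drop (Suc (Suc i)) a"

lemma decomp: "Suc i < length a \<Longrightarrow> a = take i a @ a!i # a!Suc i # drop (Suc (Suc i)) a"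
  by (metis Cons_nth_drop_Suc Suc_lessD append_take_drop_id)

lemma VS_decomp: "i \<in> TS False True a \<Longrightarrow> a = take i a @ False # True # drop (Suc (Suc i)) a"
  using decomp[of i a] by (auto simp: TS_def)

lemma length_flip: "i \<in> TS False True a \<Longrightarrow> length (flip a i) = length a"
  by (auto simp: flip_def TS_def)

lemma height_take_TF: "height (take m (True # False # ys)) = height (take m (False # True # ys)) + (if m = 1 then 2 else 0)"
  by (cases m; cases "m - 1") auto

lemma height_flip:
  assumes "i \<in> TS False True a"
  shows "height (take k (flip a i)) = height (take k a) + (if k = Suc i then 2 else 0)"
proof -
  have li: "i < length a" "length (take i a) = i" using assms by (auto simp: TS_def)
  have a: "height (take k a) = height (take k (take i a @ False # True # drop (Suc (Suc i)) a))"
    using VS_decomp[OF assms] by simp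
  show ?thesis unfolding a flip_def height_take_append li(2) height_take_TF by auto
qed

lemma nth_flip:
  assumes "i \<in> TS False True a" "t < length a"
  shows "flip a i ! t = (if t = i then True else if t = Suc i then False else a ! t)"
proof -
  let ?d = "drop (Suc (Suc i)) a"
  have ad: "a ! t = (take i a @ False # True # ?d) ! t"
    using VS_decomp[OF assms(1)] by simp
  have li: "length (take i a) = i" using assms by (auto simp: TS_def)
  have sl: "Suc i < length a" using assms(1) by (simp add: TS_def)
  have fl: "flip a i ! t = (take i a @ True # False # ?d) ! t" by (simp add: flip_def)
  consider "t < i" | "t = i" | "t = Suc i" | "Suc i < t" by linarith
  then show ?thesis
  proof cases
    case 1
    have "flip a i ! t = take i a ! t" unfolding fl using 1 li by (simp only: nth_append if_True)
    also have "\<dots> = a ! t" using 1 by simp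
    finally show ?thesis using 1 by simp
  next
    case 2 then show ?thesis unfolding fl using sl by (auto simp add: nth_append min_def)
  next
    case 3 then show ?thesis unfolding fl using sl by (auto simp add: nth_append min_def)
  next
    case 4
    then obtain s where s: "t - i = Suc (Suc s)" by (metis Suc_diff_Suc Suc_lessD Suc_lessE diff_Suc_Suc)
    have "flip a i ! t = ?d ! s" unfolding fl using 4 s using sl by (auto simp add: nth_append min_def)
    moreover have "a ! t = ?d ! s" unfolding ad using 4 s using sl by (auto simp add: nth_append min_def)
    ultimately show ?thesis using 4 by simp
  qed
qed

lemma inj_flip: "inj_on (flip a) (TS False True a)"
proof (rule inj_onI)
  fix i j assume i: "i \<in> TS False True a" and j: "j \<in> TS False True a" and eq: "flip a i = flip a j"
  show "i = j"
  proof (rule ccontr)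
    assume ne: "i \<noteq> j"
    have il: "i < length a" "Suc i < length a" "\<not> a!i" "a ! Suc i" using i by (auto simp: TS_def)
    have jl: "j < length a" "Suc j < length a" "\<not> a!j" "a ! Suc j" using j by (auto simp: TS_def)
    have "flip a i ! i = flip a j ! i" using eq by simp
    then show False using nth_flip[OF i il(1)] nth_flip[OF j il(1)] ne il jl
      by (auto split: if_splits)
  qed
qed

lemma vl_flip:
  assumes "i \<in> TS False True a"
  shows "tc False True a \<le> tc False True (flip a i) + 1" "tc False True (flip a i) \<le> tc False True a + 1"
proof -
  have a: "tc False True a = tc False True (take i a @ False # True # drop (Suc (Suc i)) a)"
    using VS_decomp[OF assms] by simp
  show "tc False True a \<le> tc False True (flip a i) + 1" "tc False True (flip a i) \<le> tc False True a + 1"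
    unfolding a flip_def tc_append by (auto simp: tc_Cons)
qed

lemma dyck_hd_last:
  assumes "w \<in> dyck_paths n" "n \<ge> 1"
  shows "hd w" "\<not> last w"
proof -
  have len: "length w = 2 * n" and nn: "\<forall>k\<le>length w. height (take k w) \<ge> 0" and h0: "height w = 0"
    using assms by (auto simp: dyck_paths_def)
  have ne: "w \<noteq> []" using len assms by auto
  have "height (take 1 w) \<ge> 0" using nn len assms by auto
  then show "hd w" using ne by (cases w) (auto split: if_splits)
  have "w = butlast w @ [last w]" using ne by simp
  then have "height w = height (butlast w) + (if last w then 1 else -1)"
    by (metis height_Cons height_Nil height_append add.right_neutral)
  moreover have "height (butlast w) \<ge> 0" using nn by (simp add: butlast_conv_take)
  ultimately show "\<not> last w" using h0 by (auto split: if_splits)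
qed

lemma pk_vl:
  assumes "w \<in> dyck_paths n" "n \<ge> 1"
  shows "tc True False w = tc False True w + 1"
proof -
  have ne: "w \<noteq> []" using assms by (auto simp: dyck_paths_def)
  show ?thesis using tc_diff[OF ne] dyck_hd_last[OF assms] by simp
qed



lemma dyckD:
  assumes "w \<in> dyck_paths n"
  shows "length w = 2 * n" "\<And>k. k \<le> length w \<Longrightarrow> height (take k w) \<ge> 0" "height w = 0"
  using assms by (auto simp: dyck_paths_def)

lemma flip_dyck:
  assumes "a \<in> dyck_paths n" "i \<in> TS False True a"
  shows "flip a i \<in> dyck_paths n"
proof -
  have l: "length (flip a i) = length a" by (rule length_flip[OF assms(2)])
  have si: "Suc i < length a" using assms(2) by (simp add: TS_def)
  have "height (flip a i) = height (take (length a) (flip a i))" using l by simp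
  also have "\<dots> = height a" using height_flip[OF assms(2), of "length a"] si by simp
  finally have h: "height (flip a i) = 0" using dyckD(3)[OF assms(1)] by simp
  have "\<forall>k\<le>length (flip a i). height (take k (flip a i)) \<ge> 0"
    using height_flip[OF assms(2)] dyckD(2)[OF assms(1)] l
    by (metis add_nonneg_nonneg order.refl verit_comp_simplify1(2) zero_le_numeral)
  then show ?thesis using l h dyckD(1)[OF assms(1)] by (simp add: dyck_paths_def)
qed

lemma le_flip:
  assumes "i \<in> TS False True a"
  shows "dyck_le a (flip a i)"
  using height_flip[OF assms] by (simp add: dyck_le_def)

lemma flip_ne:
  assumes "i \<in> TS False True a"
  shows "flip a i \<noteq> a"
proof -
  have "i < length a" "\<not> a ! i" using assms by (auto simp: TS_def)
  then show ?thesis using nth_flip[OF assms, of i] by auto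
qed

lemma parity:
  assumes "k \<le> length u" "k \<le> length v"
  shows "even (height (take k u) - height (take k v))"
proof -
  have "height (take k u) - height (take k v) = 2 * (int (length (filter id (take k u))) - int (length (filter id (take k v))))"
    using assms by (simp add: height_cnt[of "take k u"] height_cnt[of "take k v"] algebra_simps)
  then show ?thesis by simp
qed

lemma between:
  assumes "i \<in> TS False True a" "length z = length a"
    and "dyck_le a z" "dyck_le z (flip a i)"
  shows "z = a \<or> z = flip a i"
proof -
  have l: "length (flip a i) = length a" by (rule length_flip[OF assms(1)])
  have lo: "\<And>k. k \<le> length a \<Longrightarrow> height (take k a) \<le> height (take k z)"
    using assms(3) by (simp add: dyck_le_def)
  have hi: "\<And>k. k \<le> length a \<Longrightarrow> height (take k z) \<le> height (take k a) + (if k = Suc i then 2 else 0)"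
    using assms(4,2) height_flip[OF assms(1)] by (simp add: dyck_le_def)
  have other: "\<And>k. k \<le> length a \<Longrightarrow> k \<noteq> Suc i \<Longrightarrow> height (take k z) = height (take k a)"
    using lo hi by force
  have si: "Suc i \<le> length a" using assms(1) by (simp add: TS_def)
  have ev: "even (height (take (Suc i) z) - height (take (Suc i) a))"
    using parity[of "Suc i" z a] si assms(2) by simp
  have "height (take (Suc i) z) - height (take (Suc i) a) \<in> {0, 2}"
  proof -
    obtain m where m: "height (take (Suc i) z) - height (take (Suc i) a) = 2 * m" using ev by (metis evenE)
    have "0 \<le> 2 * m" "2 * m \<le> 2" using lo[OF si] hi[OF si] m by auto
    then have "m = 0 \<or> m = 1" by auto
    then show ?thesis using m by auto
  qed
  then show ?thesis
  proof
    assume "height (take (Suc i) z) - height (take (Suc i) a) = 0"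
    then have "\<forall>k\<le>length z. height (take k z) = height (take k a)" using other assms(2) by (metis eq_iff_diff_eq_0)
    then have "z = a" using eq_by_heights[of z a] assms(2) by simp
    then show ?thesis by simp
  next
    assume "height (take (Suc i) z) - height (take (Suc i) a) \<in> {2}"
    then have "\<forall>k\<le>length z. height (take k z) = height (take k (flip a i))"
      using other assms(2) height_flip[OF assms(1)] by auto
    then have "z = flip a i" using eq_by_heights[of z "flip a i"] assms(2) l by simp
    then show ?thesis by simp
  qed
qed



lemma sum_step_all_false:
  assumes "\<And>t. p \<le> t \<Longrightarrow> t < q \<Longrightarrow> \<not> w ! t"
  shows "(\<Sum>t=p..<q. step_val (w!t)) = - int (q - p)"
proof -
  have "(\<Sum>t=p..<q. step_val (w!t)) = (\<Sum>t=p..<q. (-1::int))"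
    using assms by (intro sum.cong) (auto simp: step_val_def)
  then show ?thesis by simp
qed

lemma sum_step_lower: "(\<Sum>t=p..<q. step_val (w!t)) \<ge> - int (q - p)"
proof -
  have "(\<Sum>t=p..<q. step_val (w!t)) \<ge> (\<Sum>t=p..<q. (-1::int))"
    by (intro sum_mono) (auto simp: step_val_def)
  then show ?thesis by simp
qed

lemma exists_flip:
  assumes a: "a \<in> dyck_paths n" and b: "b \<in> dyck_paths n" and le: "dyck_le a b" and ne: "a \<noteq> b"
  shows "\<exists>i\<in>TS False True a. dyck_le (flip a i) b"
proof -
  define L where "L = length a"
  have lb: "length b = L" using a b by (simp add: L_def dyck_paths_def)
  have ex: "\<exists>k. k < L \<and> a!k \<noteq> b!k"
  proof (rule ccontr)
    assume "\<not> ?thesis"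
    then have "a = b" using lb by (intro nth_equalityI) (auto simp: L_def)
    then show False using ne by simp
  qed
  define k where "k = (LEAST k. k < L \<and> a!k \<noteq> b!k)"
  have k: "k < L" "a!k \<noteq> b!k" using LeastI_ex[OF ex] by (auto simp: k_def)
  have before: "a!t = b!t" if t: "t < k" for t
  proof -
    have "\<not> (t < L \<and> a!t \<noteq> b!t)" using not_less_Least[OF t[unfolded k_def]] .
    then show ?thesis using t k(1) by simp
  qed
  have tk: "take k a = take k b" using k(1) lb before by (intro nth_equalityI) (auto simp: L_def)
  have leS: "height (take (Suc k) a) \<le> height (take (Suc k) b)"
    using le k(1) by (simp add: dyck_le_def L_def)
  have "height (take (Suc k) a) = height (take k a) + (if a!k then 1 else -1)"
    using height_take_Suc[of k a] k(1) by (simp add: L_def)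
  moreover have "height (take (Suc k) b) = height (take k a) + (if b!k then 1 else -1)"
    using height_take_Suc[of k b] k(1) lb tk by simp
  ultimately have akf: "\<not> a!k" and bkt: "b!k" using leS k(2) by (auto split: if_splits)
  define h where "h = height (take k a)"
  have hb: "height (take k b) = h" using tk by (simp add: h_def)
  have bj: "height (take j b) \<ge> h + 1 - int (j - Suc k)" if "k < j" "j \<le> L" for j
  proof -
    have "height (take j b) = h + (\<Sum>t=k..<j. step_val (b!t))"
      using height_take_sum[of k j b] that lb hb by simp
    also have "(\<Sum>t=k..<j. step_val (b!t)) = step_val (b!k) + (\<Sum>t=Suc k..<j. step_val (b!t))"
      using that(1) by (rule sum.atLeast_Suc_lessThan)
    moreover have "step_val (b!k) = 1" using bkt by (simp add: step_val_def)
    moreover have "(\<Sum>t=Suc k..<j. step_val (b!t)) \<ge> - int (j - Suc k)"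
      by (rule sum_step_lower[where p="Suc k" and q=j and w=b])
    ultimately show ?thesis by linarith
  qed
  have aj: "height (take j a) = h - int (j - k)" if "k \<le> j" "j \<le> L" "\<And>t. k \<le> t \<Longrightarrow> t < j \<Longrightarrow> \<not> a!t" for j
    using height_take_sum[of k j a] that sum_step_all_false[where p=k and q=j and w=a] by (simp add: h_def L_def)
  have exj: "\<exists>j. k < j \<and> j < L \<and> a!j"
  proof (rule ccontr)
    assume nj: "\<not> ?thesis"
    have "\<And>t. k \<le> t \<Longrightarrow> t < L \<Longrightarrow> \<not> a!t" using nj akf by (metis le_neq_implies_less)
    then have "height (take L a) = h - int (L - k)" using aj[of L] k(1) by simp
    moreover have "height (take L b) \<ge> h + 1 - int (L - Suc k)" using bj[of L] k(1) by simp
    moreover have "height (take L a) = 0" "height (take L b) = 0"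
      using dyckD(3)[OF a] dyckD(3)[OF b] lb by (auto simp: L_def)
    ultimately show False using k(1) by linarith
  qed
  define j where "j = (LEAST j. k < j \<and> j < L \<and> a!j)"
  have j: "k < j" "j < L" "a!j" using LeastI_ex[OF exj] by (auto simp: j_def)
  have between_f: "\<And>t. k \<le> t \<Longrightarrow> t < j \<Longrightarrow> \<not> a!t"
  proof -
    fix t assume t: "k \<le> t" "t < j"
    show "\<not> a!t"
    proof (cases "t = k")
      case True then show ?thesis using akf by simp
    next
      case False
      then have "k < t" using t by simp
      have "\<not> (k < t \<and> t < L \<and> a!t)" using not_less_Least[of t "\<lambda>j. k < j \<and> j < L \<and> a!j"] t(2) by (simp add: j_def)
      then show ?thesis using \<open>k < t\<close> t j(2) by simp
    qed
  qed
  define i where "i = j - 1"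
  have ji: "j = Suc i" using j(1) by (simp add: i_def)
  have iV: "i \<in> TS False True a"
    using j ji between_f[of i] by (auto simp: TS_def L_def)
  have "dyck_le (flip a i) b"
    unfolding dyck_le_def
  proof (intro allI impI)
    fix m assume m: "m \<le> length (flip a i)"
    then have mL: "m \<le> L" using length_flip[OF iV] by (simp add: L_def)
    show "height (take m (flip a i)) \<le> height (take m b)"
    proof (cases "m = Suc i")
      case True
      have "height (take j a) = h - int (j - k)" using aj[of j] j between_f by simp
      moreover have "height (take j b) \<ge> h + 1 - int (j - Suc k)" using bj[of j] j by simp
      ultimately show ?thesis using height_flip[OF iV, of m] True ji j(1) by simp
    next
      case False
      then show ?thesis using height_flip[OF iV, of m] le mL by (simp add: dyck_le_def L_def)
    qed
  qed
  then show ?thesis using iV by blast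
qed

lemma cov_eq:
  assumes a: "a \<in> dyck_paths n"
  shows "{b. covers (dyck_paths n) dyck_le a b} = flip a ` TS False True a"
proof (intro set_eqI iffI)
  fix b assume "b \<in> {b. covers (dyck_paths n) dyck_le a b}"
  then have b: "b \<in> dyck_paths n" and le: "dyck_le a b" and ne: "a \<noteq> b"
    and nz: "\<not> (\<exists>z\<in>dyck_paths n. poset_less (dyck_paths n) dyck_le a z \<and> poset_less (dyck_paths n) dyck_le z b)"
    by (auto simp: covers_def poset_less_def)
  obtain i where i: "i \<in> TS False True a" "dyck_le (flip a i) b" using exists_flip[OF a b le ne] by blast
  have "flip a i = b"
  proof (rule ccontr)
    assume "flip a i \<noteq> b"
    then have "poset_less (dyck_paths n) dyck_le a (flip a i) \<and> poset_less (dyck_paths n) dyck_le (flip a i) b"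
      using flip_dyck[OF a i(1)] a b le_flip[OF i(1)] flip_ne[OF i(1)] i(2) by (auto simp: poset_less_def)
    then show False using nz flip_dyck[OF a i(1)] by blast
  qed
  then show "b \<in> flip a ` TS False True a" using i(1) by blast
next
  fix b assume "b \<in> flip a ` TS False True a"
  then obtain i where i: "i \<in> TS False True a" and bi: "b = flip a i" by blast
  have fd: "flip a i \<in> dyck_paths n" by (rule flip_dyck[OF a i])
  have "\<not> (\<exists>z\<in>dyck_paths n. poset_less (dyck_paths n) dyck_le a z \<and> poset_less (dyck_paths n) dyck_le z (flip a i))"
  proof
    assume "\<exists>z\<in>dyck_paths n. poset_less (dyck_paths n) dyck_le a z \<and> poset_less (dyck_paths n) dyck_le z (flip a i)"
    then obtain z where z: "z \<in> dyck_paths n" "dyck_le a z" "dyck_le z (flip a i)" "z \<noteq> a" "z \<noteq> flip a i"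
      by (auto simp: poset_less_def)
    have lz: "length z = length a" using z(1) a by (simp add: dyck_paths_def)
    show False using between[OF i lz z(2,3)] z(4,5) by simp
  qed
  then show "b \<in> {b. covers (dyck_paths n) dyck_le a b}"
    using bi fd a le_flip[OF i] flip_ne[OF i] by (auto simp: covers_def poset_less_def)
qed



abbreviation "vl \<equiv> tc False True"
abbreviation "pk \<equiv> tc True False"
abbreviation "Cv n a \<equiv> {b. covers (dyck_paths n) dyck_le a b}"

lemma finite_dyck: "finite (dyck_paths n)"
proof -
  have "finite {xs. set xs \<subseteq> (UNIV::bool set) \<and> length xs = 2 * n}"
    by (rule finite_lists_length_eq) simp
  then show ?thesis by (rule finite_subset[rotated]) (auto simp: dyck_paths_def)
qed

lemma card_cov: "a \<in> dyck_paths n \<Longrightarrow> card (Cv n a) = vl a"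
  using cov_eq[of a n] card_image[OF inj_flip[of a]] card_TS by simp

lemma cov_sub: "Cv n a \<subseteq> dyck_paths n"
  by (auto simp: covers_def poset_less_def)

lemma finite_cov: "finite (Cv n a)"
  using finite_subset[OF cov_sub finite_dyck] .

lemma len3: "length c = 3 \<Longrightarrow> c = [c!0, c!1, c!2]"
  by (cases c; cases "tl c"; cases "tl (tl c)") (auto simp: numeral_3_eq_3)

lemma sc_sum: "sc (dyck_paths n) dyck_le 2 = (\<Sum>a\<in>dyck_paths n. \<Sum>b\<in>Cv n a. card (Cv n b))"
proof -
  define D where "D = dyck_paths n"
  define f where "f = (\<lambda>(a::bool list, (b::bool list, c::bool list)). [a, b, c])"
  have S: "saturated_chains D dyck_le 2 = f ` (SIGMA a:D. SIGMA b:Cv n a. Cv n b)"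
  proof (intro set_eqI iffI)
    fix c assume "c \<in> saturated_chains D dyck_le 2"
    then have c: "length c = 3" "set c \<subseteq> D" "covers D dyck_le (c!0) (c!1)" "covers D dyck_le (c!1) (c!2)"
      by (auto simp: saturated_chains_def numeral_2_eq_2)
    have "c!0 \<in> D" using c(3) by (auto simp: covers_def poset_less_def)
    then have "(c!0, c!1, c!2) \<in> (SIGMA a:D. SIGMA b:Cv n a. Cv n b)" using c(3,4) by (simp add: D_def)
    moreover have "c = f (c!0, c!1, c!2)" using len3[OF c(1)] by (simp add: f_def)
    ultimately show "c \<in> f ` (SIGMA a:D. SIGMA b:Cv n a. Cv n b)" by blast
  next
    fix c assume "c \<in> f ` (SIGMA a:D. SIGMA b:Cv n a. Cv n b)"
    then obtain a b d where abd: "a \<in> D" "covers D dyck_le a b" "covers D dyck_le b d" "c = [a, b, d]"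
      by (auto simp: f_def D_def)
    have "b \<in> D" "d \<in> D" using abd(2,3) by (auto simp: covers_def poset_less_def)
    then show "c \<in> saturated_chains D dyck_le 2" using abd
      by (auto simp: saturated_chains_def less_Suc_eq numeral_2_eq_2)
  qed
  have inj: "inj_on f (SIGMA a:D. SIGMA b:Cv n a. Cv n b)"
    by (rule inj_onI) (auto simp: f_def)
  have "sc D dyck_le 2 = card (SIGMA a:D. SIGMA b:Cv n a. Cv n b)"
    unfolding sc_def S by (rule card_image[OF inj])
  also have "\<dots> = (\<Sum>a\<in>D. card (SIGMA b:Cv n a. Cv n b))"
    by (rule card_SigmaI) (auto simp: D_def finite_dyck finite_cov)
  also have "\<dots> = (\<Sum>a\<in>D. \<Sum>b\<in>Cv n a. card (Cv n b))"
    by (intro sum.cong refl card_SigmaI) (auto simp: finite_cov)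
  finally show ?thesis by (simp add: D_def)
qed

lemma inner_eq:
  assumes "a \<in> dyck_paths n"
  shows "(\<Sum>b\<in>Cv n a. card (Cv n b)) = (\<Sum>i\<in>TS False True a. vl (flip a i))"
proof -
  have "(\<Sum>b\<in>Cv n a. card (Cv n b)) = (\<Sum>b\<in>flip a ` TS False True a. card (Cv n b))"
    using cov_eq[OF assms] by simp
  also have "\<dots> = (\<Sum>i\<in>TS False True a. card (Cv n (flip a i)))"
    by (rule sum.reindex[OF inj_flip, unfolded comp_def])
  also have "\<dots> = (\<Sum>i\<in>TS False True a. vl (flip a i))"
    by (intro sum.cong refl card_cov flip_dyck[OF assms]) 
  finally show ?thesis .
qed

lemma inner_bounds:
  assumes "a \<in> dyck_paths n"
  shows "real (vl a) * (real (vl a) - 1) \<le> real (\<Sum>b\<in>Cv n a. card (Cv n b))"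
    "real (\<Sum>b\<in>Cv n a. card (Cv n b)) \<le> real (vl a) * (real (vl a) + 1)"
proof -
  have eq: "real (\<Sum>b\<in>Cv n a. card (Cv n b)) = (\<Sum>i\<in>TS False True a. real (vl (flip a i)))"
    using inner_eq[OF assms] by simp
  have c: "card (TS False True a) = vl a" by (rule card_TS)
  have "(\<Sum>i\<in>TS False True a. real (vl (flip a i))) \<le> (\<Sum>i\<in>TS False True a. real (vl a) + 1)"
    using vl_flip(2) by (intro sum_mono) (metis of_nat_1 of_nat_add of_nat_le_iff)
  also have "\<dots> = real (vl a) * (real (vl a) + 1)" by (simp only: sum_constant c)
  finally show "real (\<Sum>b\<in>Cv n a. card (Cv n b)) \<le> real (vl a) * (real (vl a) + 1)" using eq by simp
  have "(\<Sum>i\<in>TS False True a. real (vl a) - 1) \<le> (\<Sum>i\<in>TS False True a. real (vl (flip a i)))"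
  proof (intro sum_mono)
    fix i assume "i \<in> TS False True a"
    then have "vl a \<le> vl (flip a i) + 1" by (rule vl_flip(1))
    then show "real (vl a) - 1 \<le> real (vl (flip a i))" by linarith
  qed
  moreover have "(\<Sum>i\<in>TS False True a. real (vl a) - 1) = real (vl a) * (real (vl a) - 1)" by (simp only: sum_constant c)
  ultimately show "real (vl a) * (real (vl a) - 1) \<le> real (\<Sum>b\<in>Cv n a. card (Cv n b))" using eq by linarith
qed

lemma sc_bounds:
  assumes "n \<ge> 1"
  shows "(\<Sum>a\<in>dyck_paths n. (real (pk a) - 1) * (real (pk a) - 2)) \<le> real (sc (dyck_paths n) dyck_le 2)"
    "real (sc (dyck_paths n) dyck_le 2) \<le> (\<Sum>a\<in>dyck_paths n. real (pk a) * (real (pk a) - 1))"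
proof -
  have pv: "a \<in> dyck_paths n \<Longrightarrow> real (pk a) = real (vl a) + 1" for a
    using pk_vl[of a n] assms by simp
  have r: "real (sc (dyck_paths n) dyck_le 2) = (\<Sum>a\<in>dyck_paths n. real (\<Sum>b\<in>Cv n a. card (Cv n b)))"
    unfolding sc_sum by simp
  show "(\<Sum>a\<in>dyck_paths n. (real (pk a) - 1) * (real (pk a) - 2)) \<le> real (sc (dyck_paths n) dyck_le 2)"
    unfolding r using inner_bounds(1) pv by (intro sum_mono) (simp add: algebra_simps)
  show "real (sc (dyck_paths n) dyck_le 2) \<le> (\<Sum>a\<in>dyck_paths n. real (pk a) * (real (pk a) - 1))"
    unfolding r using inner_bounds(2) pv by (intro sum_mono) (simp add: algebra_simps)
qed



lemma dyck_nn: "w \<in> dyck_paths n \<Longrightarrow> height (take k w) \<ge> 0"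
  using dyckD(2)[of w n k] dyckD(2)[of w n "length w"] by (cases "k \<le> length w") auto

definition ins :: "bool list \<Rightarrow> nat \<Rightarrow> bool list" where
  "ins y i = take i y @ True # False # drop i y"

definition rem :: "bool list \<Rightarrow> nat \<Rightarrow> bool list" where
  "rem x i = take i x @ drop (Suc (Suc i)) x"

lemma length_ins: "i \<le> length y \<Longrightarrow> length (ins y i) = Suc (Suc (length y))"
  by (simp add: ins_def)

lemma ins_height:
  assumes "i \<le> length y"
  shows "height (take k (ins y i)) =
    (if k \<le> i then height (take k y) else if k = Suc i then height (take i y) + 1 else height (take (k - 2) y))"
proof -
  have li: "length (take i y) = i" using assms by simp
  have y: "y = take i y @ drop i y" by simp
  have e: "height (take k (ins y i)) = (if k \<le> i then height (take k (take i y)) else height (take i y) + height (take (k - i) (True # False # drop i y)))"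
    unfolding ins_def height_take_append li ..
  show ?thesis
  proof (cases "k \<le> i")
    case True then show ?thesis using e by (simp add: min_def)
  next
    case False
    show ?thesis
    proof (cases "k = Suc i")
      case True then show ?thesis using e by simp
    next
      case False2: False
      then obtain r where r: "k - i = Suc (Suc r)" using False by (metis Suc_diff_Suc diff_Suc_Suc not_less_eq_eq Suc_lessI not_le zero_less_diff)
      have kk: "k - 2 = i + r" using r False by arith
      have "height (take (k - 2) y) = height (take (i + r) (take i y @ drop i y))" using kk by simp
      also have "\<dots> = height (take i y) + height (take r (drop i y))"
        unfolding height_take_append li by (cases r) auto
      finally show ?thesis using e r False False2 by simp
    qed
  qed
qed

lemma ins_dyck:
  assumes y: "y \<in> dyck_paths m" and i: "i \<le> 2 * m"
  shows "ins y i \<in> dyck_paths (Suc m)"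
proof -
  have ly: "length y = 2 * m" using dyckD(1)[OF y] .
  have il: "i \<le> length y" using ly i by simp
  have l: "length (ins y i) = 2 * Suc m" using length_ins[OF il] ly by simp
  have nn: "height (take k (ins y i)) \<ge> 0" for k
  proof -
    have "height (take k' y) \<ge> 0" for k'
      using dyck_nn[OF y] .
    then show ?thesis using ins_height[OF il, of k] by (auto split: if_splits)
  qed
  have "height (ins y i) = height (take (length (ins y i)) (ins y i))" by simp
  also have "\<dots> = height (take (2 * m) y)" using ins_height[OF il, of "length (ins y i)"] l i by simp
  also have "\<dots> = 0" using dyckD(3)[OF y] ly by simp
  finally show ?thesis using l nn by (simp add: dyck_paths_def)
qed

lemma ins_TS:
  assumes "i \<le> length y"
  shows "i \<in> TS True False (ins y i)"
  using assms by (simp add: TS_def ins_def nth_append min_def)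

lemma rem_ins: "i \<le> length y \<Longrightarrow> rem (ins y i) i = y"
  by (simp add: rem_def ins_def min_def)

lemma ins_rem:
  assumes "i \<in> TS True False x"
  shows "ins (rem x i) i = x"
proof -
  have si: "Suc i < length x" and a: "x!i" and b: "\<not> x!Suc i" using assms by (auto simp: TS_def)
  have "x = take i x @ x!i # x!Suc i # drop (Suc (Suc i)) x" using decomp[OF si] .
  also have "\<dots> = ins (rem x i) i" using a b si by (simp add: ins_def rem_def min_def)
  finally show ?thesis by simp
qed

lemma rem_dyck:
  assumes x: "x \<in> dyck_paths (Suc m)" and i: "i \<in> TS True False x"
  shows "rem x i \<in> dyck_paths m"
proof -
  have si: "Suc i < length x" using i by (simp add: TS_def)
  have lx: "length x = 2 * Suc m" using dyckD(1)[OF x] .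
  define r where "r = rem x i"
  have lr: "length r = 2 * m" using si lx by (simp add: r_def rem_def)
  have il: "i \<le> length r" using si lx lr by simp
  have xr: "x = ins r i" using ins_rem[OF i] by (simp add: r_def)
  have hx: "height (take k x) \<ge> 0" for k
    using dyck_nn[OF x] .
  have nn: "height (take k r) \<ge> 0" for k
  proof (cases "k \<le> i")
    case True then show ?thesis using hx[of k] ins_height[OF il, of k] xr by simp
  next
    case False then show ?thesis using hx[of "k + 2"] ins_height[OF il, of "k + 2"] xr by simp
  qed
  have "height r = height (take (2 * m) r)" using lr by simp
  also have "\<dots> = height (take (2 * m + 2) x)" using ins_height[OF il, of "2 * m + 2"] xr il lr by simp
  also have "\<dots> = 0" using dyckD(3)[OF x] lx by simp
  finally have "height r = 0" .
  then show ?thesis using lr nn by (simp add: dyck_paths_def r_def)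
qed

lemma ins_sum:
  fixes g :: "bool list \<Rightarrow> real"
  shows "(\<Sum>x\<in>dyck_paths (Suc m). real (pk x) * g x) = (\<Sum>y\<in>dyck_paths m. \<Sum>i\<le>2 * m. g (ins y i))"
proof -
  have "(\<Sum>x\<in>dyck_paths (Suc m). real (pk x) * g x) = (\<Sum>x\<in>dyck_paths (Suc m). \<Sum>i\<in>TS True False x. g x)"
    by (intro sum.cong refl) (simp add: card_TS)
  also have "\<dots> = (\<Sum>(x, i)\<in>(SIGMA x:dyck_paths (Suc m). TS True False x). g x)"
    by (rule sum.Sigma) (auto simp: finite_dyck)
  also have "\<dots> = (\<Sum>(y, i)\<in>(SIGMA y:dyck_paths m. {..2 * m}). g (ins y i))"
  proof (rule sum.reindex_bij_witness[where i = "\<lambda>(y, i). (ins y i, i)" and j = "\<lambda>(x, i). (rem x i, i)"])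
    fix a assume "a \<in> (SIGMA x:dyck_paths (Suc m). TS True False x)"
    then obtain x i where a: "a = (x, i)" "x \<in> dyck_paths (Suc m)" "i \<in> TS True False x" by blast
    have si: "Suc i < length x" using a(3) by (simp add: TS_def)
    have lx: "length x = 2 * Suc m" using dyckD(1)[OF a(2)] .
    show "(case (case a of (x, i) \<Rightarrow> (rem x i, i)) of (y, i) \<Rightarrow> (ins y i, i)) = a"
      using ins_rem[OF a(3)] a(1) by simp
    show "(case a of (x, i) \<Rightarrow> (rem x i, i)) \<in> (SIGMA y:dyck_paths m. {..2 * m})"
      using rem_dyck[OF a(2,3)] a(1) si lx by simp
    show "(case (case a of (x, i) \<Rightarrow> (rem x i, i)) of (y, i) \<Rightarrow> g (ins y i)) = (case a of (x, i) \<Rightarrow> g x)"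
      using ins_rem[OF a(3)] a(1) by simp
  next
    fix b assume "b \<in> (SIGMA y:dyck_paths m. {..2 * m})"
    then obtain y i where b: "b = (y, i)" "y \<in> dyck_paths m" "i \<le> 2 * m" by blast
    have il: "i \<le> length y" using dyckD(1)[OF b(2)] b(3) by simp
    show "(case (case b of (y, i) \<Rightarrow> (ins y i, i)) of (x, i) \<Rightarrow> (rem x i, i)) = b"
      using rem_ins[OF il] b(1) by simp
    show "(case b of (y, i) \<Rightarrow> (ins y i, i)) \<in> (SIGMA x:dyck_paths (Suc m). TS True False x)"
      using ins_dyck[OF b(2,3)] ins_TS[OF il] b(1) by simp
  qed
  also have "\<dots> = (\<Sum>y\<in>dyck_paths m. \<Sum>i\<le>2 * m. g (ins y i))"
    by (rule sum.Sigma[symmetric]) (auto simp: finite_dyck)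
  finally show ?thesis .
qed

lemma pk_ins: "i \<le> length y \<Longrightarrow> real (pk (ins y i)) - 1 = real (pk y) - (if 0 < i \<and> i < length y \<and> y!(i-1) \<and> \<not> y!i then 1 else 0)"
proof -
  assume il: "i \<le> length y"
  have "pk (ins y i) = pk (take i y) + 1 + pk (drop i y)"
    unfolding ins_def tc_append by (simp add: tc_Cons)
  moreover have "pk y = pk (take i y) + pk (drop i y) + (if take i y \<noteq> [] \<and> drop i y \<noteq> [] \<and> last (take i y) \<and> \<not> hd (drop i y) then 1 else 0)"
    using tc_append[of True False "take i y" "drop i y"] by simp
  moreover have "(take i y \<noteq> [] \<and> drop i y \<noteq> [] \<and> last (take i y) \<and> \<not> hd (drop i y)) = (0 < i \<and> i < length y \<and> y!(i-1) \<and> \<not> y!i)"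
  proof (cases "0 < i \<and> i < length y")
    case True
    then have "last (take i y) = y!(i-1)" by (subst last_conv_nth) (auto simp: min_def)
    moreover have "hd (drop i y) = y!i" using True by (simp add: hd_drop_conv_nth)
    ultimately show ?thesis using True by auto
  next
    case False then show ?thesis using il by auto
  qed
  ultimately show ?thesis by (auto split: if_splits)
qed

lemma sum_pk_ins: "(\<Sum>i\<le>length y. real (pk (ins y i)) - 1) = real (length y) * real (pk y)"
proof -
  define P where "P i = (0 < i \<and> i < length y \<and> y!(i-1) \<and> \<not> y!i)" for i
  have "(\<Sum>i\<le>length y. real (pk (ins y i)) - 1) = (\<Sum>i\<le>length y. real (pk y) - (if P i then 1 else 0))"
    by (intro sum.cong refl) (simp add: pk_ins P_def)
  also have "\<dots> = real (Suc (length y)) * real (pk y) - (\<Sum>i\<le>length y. (if P i then 1 else 0))"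
    by (simp add: sum_subtractf)
  also have "(\<Sum>i\<le>length y. (if P i then 1 else 0 :: real)) = real (card {i\<in>{..length y}. P i})"
    by (simp add: sum.If_cases Int_def)
  also have "{i\<in>{..length y}. P i} = Suc ` TS True False y"
  proof (intro set_eqI iffI)
    fix i assume "i \<in> {i\<in>{..length y}. P i}"
    then have "P i" by simp
    then show "i \<in> Suc ` TS True False y"
      by (intro image_eqI[of _ _ "i - 1"]) (auto simp: P_def TS_def)
  next
    fix i assume "i \<in> Suc ` TS True False y"
    then show "i \<in> {i\<in>{..length y}. P i}" by (auto simp: P_def TS_def)
  qed
  also have "card (Suc ` TS True False y) = pk y" by (simp add: card_image card_TS)
  finally show ?thesis by (simp add: algebra_simps)
qed

lemma P1: "(\<Sum>x\<in>dyck_paths (Suc m). real (pk x)) = real (2 * m + 1) * real (card (dyck_paths m))"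
  using ins_sum[where m=m and g="\<lambda>_. 1"] by simp

lemma P2: "(\<Sum>x\<in>dyck_paths (Suc m). real (pk x) * (real (pk x) - 1)) = real (2 * m) * (\<Sum>y\<in>dyck_paths m. real (pk y))"
proof -
  have "(\<Sum>x\<in>dyck_paths (Suc m). real (pk x) * (real (pk x) - 1)) = (\<Sum>y\<in>dyck_paths m. \<Sum>i\<le>2 * m. real (pk (ins y i)) - 1)"
    by (rule ins_sum)
  also have "\<dots> = (\<Sum>y\<in>dyck_paths m. real (2 * m) * real (pk y))"
  proof (intro sum.cong refl)
    fix y assume "y \<in> dyck_paths m"
    then have "length y = 2 * m" by (rule dyckD(1))
    then show "(\<Sum>i\<le>2 * m. real (pk (ins y i)) - 1) = real (2 * m) * real (pk y)"
      using sum_pk_ins[of y] by simp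
  qed
  finally show ?thesis by (simp add: sum_distrib_left)
qed



lemma finite_len: "finite {xs::bool list. length xs = m}"
proof -
  have "finite {xs. set xs \<subseteq> (UNIV::bool set) \<and> length xs = m}"
    by (rule finite_lists_length_eq) simp
  then show ?thesis by simp
qed

lemma count_lists: "card {w::bool list. length w = m \<and> length (filter id w) = k} = m choose k"
proof (induction m arbitrary: k)
  case 0
  have e: "{w::bool list. length w = 0 \<and> length (filter id w) = k} = (if k = 0 then {[]} else {})" by auto
  show ?case by (subst e) (cases k; simp)
next
  case (Suc m)
  have fin: "finite {w::bool list. length w = m \<and> P w}" for P
    by (rule finite_subset[OF _ finite_len[of m]]) auto
  have split: "{w::bool list. length w = Suc m \<and> length (filter id w) = k} =
     Cons True ` {w. length w = m \<and> Suc (length (filter id w)) = k} \<union> Cons False ` {w. length w = m \<and> length (filter id w) = k}"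
  proof (intro set_eqI iffI)
    fix w assume "w \<in> {w::bool list. length w = Suc m \<and> length (filter id w) = k}"
    then obtain x w' where w: "w = x # w'" "length w' = m" "length (filter id w) = k"
      by (auto simp: length_Suc_conv)
    then show "w \<in> Cons True ` {w. length w = m \<and> Suc (length (filter id w)) = k} \<union> Cons False ` {w. length w = m \<and> length (filter id w) = k}"
      by (cases x) auto
  qed auto
  have "card {w::bool list. length w = Suc m \<and> length (filter id w) = k} =
     card (Cons True ` {w. length w = m \<and> Suc (length (filter id w)) = k}) + card (Cons False ` {w. length w = m \<and> length (filter id w) = k})"
    unfolding split by (rule card_Un_disjoint) (auto intro: fin)
  also have "\<dots> = card {w::bool list. length w = m \<and> Suc (length (filter id w)) = k} + card {w::bool list. length w = m \<and> length (filter id w) = k}"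
    by (simp add: card_image)
  finally have c: "card {w::bool list. length w = Suc m \<and> length (filter id w) = k} =
     card {w::bool list. length w = m \<and> Suc (length (filter id w)) = k} + (m choose k)" using Suc by simp
  show ?case
  proof (cases k)
    case 0
    have X0: "{w::bool list. length w = m \<and> Suc (length (filter id w)) = 0} = {}" by simp
    show ?thesis using c[unfolded 0] unfolding 0 X0 card.empty add_0 binomial_n_0 .
  next
    case (Suc k')
    have X: "{w::bool list. length w = m \<and> Suc (length (filter id w)) = k} = {w. length w = m \<and> length (filter id w) = k'}"
      using Suc by simp
    have "card {w::bool list. length w = Suc m \<and> length (filter id w) = k} = (m choose k') + (m choose k)"
      using c[unfolded X] Suc.IH[of k'] by linarith
    then show ?thesis unfolding Suc binomial_Suc_Suc .
  qed
qed

lemma height_map_Not: "height (map Not xs) = - height xs"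
  by (induction xs) auto

definition hit :: "bool list \<Rightarrow> bool" where "hit w = (\<exists>k. height (take k w) = -1)"
definition fk :: "bool list \<Rightarrow> nat" where "fk w = (LEAST k. height (take k w) = -1)"
definition rfl :: "bool list \<Rightarrow> bool list" where "rfl w = take (fk w) w @ map Not (drop (fk w) w)"

lemma fk1: "hit w \<Longrightarrow> height (take (fk w) w) = -1"
  unfolding hit_def fk_def by (rule LeastI_ex)

lemma fk2: "k < fk w \<Longrightarrow> height (take k w) \<noteq> -1"
  unfolding fk_def by (rule not_less_Least)

lemma fk3: "hit w \<Longrightarrow> fk w \<le> length w"
proof (rule ccontr)
  assume h: "hit w" and "\<not> fk w \<le> length w"
  then have "length w < fk w" by simp
  then have "height (take (length w) w) \<noteq> -1" by (rule fk2)
  moreover have "height (take (fk w) w) = -1" using fk1[OF h] .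
  ultimately show False using \<open>length w < fk w\<close> by simp
qed

lemma IVT: "height (take k w) < 0 \<Longrightarrow> hit w"
proof (induction k)
  case 0 then show ?case by simp
next
  case (Suc k)
  show ?case
  proof (cases "height (take k w) < 0")
    case True then show ?thesis using Suc.IH by simp
  next
    case False
    show ?thesis
    proof (cases "k < length w")
      case True
      then have "height (take (Suc k) w) = height (take k w) + (if w!k then 1 else -1)" by (rule height_take_Suc)
      then have "height (take (Suc k) w) = -1" using False Suc.prems by (auto split: if_splits)
      then show ?thesis unfolding hit_def by blast
    next
      case False2: False
      then have "take (Suc k) w = take k w" by simp
      then show ?thesis using False Suc.prems by simp
    qed
  qed
qed

lemma rfl_props:
  assumes h: "hit w"
  shows "length (rfl w) = length w" "hit (rfl w)" "fk (rfl w) = fk w" "rfl (rfl w) = w"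
    "height (rfl w) = -2 - height w"
proof -
  have f3: "fk w \<le> length w" by (rule fk3[OF h])
  show l: "length (rfl w) = length w" using f3 by (simp add: rfl_def)
  have tk: "take k (rfl w) = take k w" if "k \<le> fk w" for k
    using that f3 by (simp add: rfl_def take_append min_def)
  have e: "height (take (fk w) (rfl w)) = -1" using tk[of "fk w"] fk1[OF h] by simp
  show hr: "hit (rfl w)" using e unfolding hit_def by blast
  show fe: "fk (rfl w) = fk w"
    unfolding fk_def[of "rfl w"]
  proof (rule Least_equality)
    show "height (take (fk w) (rfl w)) = -1" by (rule e)
    fix k assume "height (take k (rfl w)) = -1"
    then show "fk w \<le> k" using tk[of k] fk2[of k w] by (cases "k \<le> fk w") force+
  qed
  show "rfl (rfl w) = w"
  proof -
    have "rfl (rfl w) = take (fk w) (rfl w) @ map Not (drop (fk w) (rfl w))"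
      using fe by (simp add: rfl_def)
    also have "\<dots> = take (fk w) w @ drop (fk w) w" using f3 by (simp add: rfl_def comp_def)
    finally show ?thesis by simp
  qed
  have "height w = height (take (fk w) w) + height (drop (fk w) w)"
    by (metis append_take_drop_id height_append)
  then show "height (rfl w) = -2 - height w" using fk1[OF h] by (simp add: rfl_def height_map_Not)
qed

lemma catalan_binom:
  assumes "n \<ge> 1"
  shows "card (dyck_paths n) + (2 * n choose (n - 1)) = 2 * n choose n"
proof -
  define Z where "Z = {w::bool list. length w = 2 * n \<and> height w = 0}"
  define M where "M = {w::bool list. length w = 2 * n \<and> height w = -2}"
  define H where "H = {w\<in>Z. hit w}"
  have Zc: "Z = {w. length w = 2 * n \<and> length (filter id w) = n}"
    unfolding Z_def by (auto simp: height_cnt)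
  have Mc: "M = {w. length w = 2 * n \<and> length (filter id w) = n - 1}"
    unfolding M_def using assms by (auto simp: height_cnt)
  have finZ: "finite Z" unfolding Zc
    by (rule finite_subset[OF _ finite_len[of "2 * n"]]) auto
  have bij: "bij_betw rfl H M"
  proof (rule bij_betw_byWitness[where f'=rfl])
    show "\<forall>a\<in>H. rfl (rfl a) = a" using rfl_props(4) by (auto simp: H_def)
    show "\<forall>a\<in>M. rfl (rfl a) = a"
    proof
      fix a assume "a \<in> M"
      then have "height (take (length a) a) < 0" by (simp add: M_def)
      then show "rfl (rfl a) = a" using rfl_props(4) IVT by blast
    qed
    show "rfl ` H \<subseteq> M" using rfl_props(1,5) by (auto simp: H_def Z_def M_def)
    show "rfl ` M \<subseteq> H"
    proof
      fix b assume "b \<in> rfl ` M"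
      then obtain a where a: "a \<in> M" "b = rfl a" by blast
      then have "height (take (length a) a) < 0" by (simp add: M_def)
      then have "hit a" by (rule IVT)
      then show "b \<in> H" using a rfl_props[of a] by (simp add: H_def Z_def M_def)
    qed
  qed
  have "Z = dyck_paths n \<union> H"
  proof (intro set_eqI iffI)
    fix w assume w: "w \<in> Z"
    show "w \<in> dyck_paths n \<union> H"
    proof (cases "\<forall>k\<le>length w. height (take k w) \<ge> 0")
      case True then show ?thesis using w by (simp add: Z_def dyck_paths_def)
    next
      case False
      then obtain k where "height (take k w) < 0" by (auto simp: not_le)
      then have "hit w" by (rule IVT)
      then show ?thesis using w by (simp add: H_def)
    qed
  qed (auto simp: Z_def H_def dyck_paths_def)
  moreover have "dyck_paths n \<inter> H = {}"
  proof (rule ccontr)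
    assume "dyck_paths n \<inter> H \<noteq> {}"
    then obtain w where w: "w \<in> dyck_paths n" "hit w" by (auto simp: H_def)
    then show False using dyck_nn[OF w(1), of "fk w"] fk1[OF w(2)] by simp
  qed
  ultimately have "card Z = card (dyck_paths n) + card H"
    using finZ by (simp add: card_Un_disjoint finite_dyck)
  moreover have "card H = card M" using bij by (rule bij_betw_same_card)
  ultimately show ?thesis using Zc Mc count_lists by simp
qed

lemma catalan_closed: "(n + 1) * card (dyck_paths n) = 2 * n choose n"
proof (cases n)
  case 0
  have "dyck_paths 0 = {[]}" by (auto simp: dyck_paths_def)
  then show ?thesis using 0 by simp
next
  case (Suc m)
  have c: "card (dyck_paths n) + (2 * n choose m) = 2 * n choose n" using catalan_binom[of n] Suc by simp
  have a1: "Suc m * (2 * n choose Suc m) = 2 * n * ((2 * n - 1) choose m)" by (rule binomial_absorption)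
  have a2: "(2 * n - m) * (2 * n choose m) = 2 * n * ((2 * n - 1) choose m)" by (rule binomial_absorb_comp)
  have "(m + 2) * (2 * n choose m) = (m + 1) * (2 * n choose n)"
    using a1 a2 Suc by (simp add: algebra_simps)
  moreover have "(m + 2) * card (dyck_paths n) + (m + 2) * (2 * n choose m) = (m + 2) * (2 * n choose n)"
    using c by (metis distrib_left)
  moreover have "(m + 2) * (2 * n choose n) = (m + 1) * (2 * n choose n) + (2 * n choose n)" by simp
  ultimately have "(m + 2) * card (dyck_paths n) = 2 * n choose n" by linarith
  then show ?thesis using Suc by simp
qed

lemma catalan_rec:
  assumes "n \<ge> 1"
  shows "real (n + 1) * real (card (dyck_paths n)) = 2 * (2 * real n - 1) * real (card (dyck_paths (n - 1)))"
proof -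
  obtain m where n: "n = Suc m" using assms by (cases n) auto
  define A where "A = 2 * n choose n"
  define Bm where "Bm = (2 * n - 1) choose m"
  define Cm where "Cm = 2 * m choose m"
  have c1: "real (n + 1) * real (card (dyck_paths n)) = real A"
    using catalan_closed[of n] unfolding A_def by (metis of_nat_mult)
  have c0: "real n * real (card (dyck_paths m)) = real Cm"
    using catalan_closed[of m] n unfolding Cm_def by (metis Suc_eq_plus1 of_nat_mult)
  have a1: "Suc m * (2 * n choose Suc m) = 2 * n * ((2 * n - 1) choose m)" by (rule binomial_absorption)
  then have a1': "n * A = 2 * n * Bm" unfolding A_def Bm_def n[symmetric] .
  have a2: "(2 * n - 1 - m) * ((2 * n - 1) choose m) = (2 * n - 1) * ((2 * n - 1 - 1) choose m)" by (rule binomial_absorb_comp)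
  have e1: "2 * n - 1 - m = n" "2 * n - 1 - 1 = 2 * m" using n by auto
  have a2': "n * Bm = (2 * n - 1) * Cm" using a2 unfolding e1 Bm_def Cm_def .
  have r1: "real n * real A = 2 * real n * real Bm" using a1' by (metis of_nat_mult of_nat_numeral)
  have r2: "real n * real Bm = (2 * real n - 1) * real Cm"
  proof -
    have "real (n * Bm) = real ((2 * n - 1) * Cm)" using a2' by simp
    moreover have "real (2 * n - 1) = 2 * real n - 1" using n by (simp add: of_nat_diff)
    ultimately show ?thesis by simp
  qed
  have np: "real n > 0" using n by simp
  have "real A = 2 * real Bm" using r1 np by (simp add: algebra_simps)
  then have nA: "real n * real A = 2 * (2 * real n - 1) * real Cm" using r2 by (simp add: algebra_simps)
  have "real n * (real (n + 1) * real (card (dyck_paths n))) = real n * real A" using c1 by simp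
  also have "\<dots> = 2 * (2 * real n - 1) * real Cm" by (rule nA)
  also have "\<dots> = real n * (2 * (2 * real n - 1) * real (card (dyck_paths m)))"
    unfolding c0[symmetric] by (simp add: algebra_simps)
  finally have "real n * (real (n + 1) * real (card (dyck_paths n))) = real n * (2 * (2 * real n - 1) * real (card (dyck_paths m)))" .
  then show ?thesis using n np by simp
qed



lemma card_dyck_pos: "card (dyck_paths n) > 0"
proof -
  have "(n + 1) * card (dyck_paths n) > 0" unfolding catalan_closed by simp
  then show ?thesis using nat_0_less_mult_iff by blast
qed

lemma hasse_bounds:
  assumes "n \<ge> 2"
  defines "U \<equiv> (real n - 1) * real n * (real n + 1) / (2 * (2 * real n - 1))"
  shows "U - real n + 1 \<le> hasse_index (dyck_paths n) dyck_le 2"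
    "hasse_index (dyck_paths n) dyck_le 2 \<le> U"
proof -
  obtain k where n: "n = Suc (Suc k)" using assms by (metis add_2_eq_Suc le_Suc_ex)
  define cn where "cn = real (card (dyck_paths n))"
  define c1 where "c1 = real (card (dyck_paths (Suc k)))"
  define c2 where "c2 = real (card (dyck_paths k))"
  define S1 where "S1 = (\<Sum>x\<in>dyck_paths n. real (pk x))"
  define S2 where "S2 = (\<Sum>x\<in>dyck_paths n. real (pk x) * (real (pk x) - 1))"
  have cnp: "cn > 0" using card_dyck_pos by (simp add: cn_def)
  have r1: "(real n + 1) * cn = 2 * (2 * real n - 1) * c1"
    using catalan_rec[of n] n by (simp add: cn_def c1_def)
  have r2: "real n * c1 = 2 * (2 * real n - 3) * c2"
    using catalan_rec[of "Suc k"] n by (simp add: c1_def c2_def algebra_simps)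
  have s1: "S1 = (2 * real n - 1) * c1"
    using P1[of "Suc k"] n by (simp add: S1_def c1_def algebra_simps)
  have s2: "S2 = 2 * (real n - 1) * ((2 * real n - 3) * c2)"
    using P2[of "Suc k"] P1[of k] n by (simp add: S2_def c2_def algebra_simps)
  have pos: "2 * real n - 1 > 0" using assms by simp
  have "2 * (2 * real n - 1) * S2 = (real n - 1) * (2 * (2 * real n - 1)) * (2 * (2 * real n - 3) * c2)"
    unfolding s2 by (simp add: algebra_simps)
  also have "\<dots> = (real n - 1) * (2 * (2 * real n - 1)) * (real n * c1)" unfolding r2 ..
  also have "\<dots> = (real n - 1) * real n * (2 * (2 * real n - 1) * c1)" by (simp add: algebra_simps)
  also have "\<dots> = (real n - 1) * real n * ((real n + 1) * cn)" using r1 by simp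
  finally have "S2 = U * cn" using pos unfolding U_def by (simp add: field_simps)
  then have S2U: "S2 / cn = U" using cnp by simp
  have "2 * (2 * real n - 1) * S1 = (2 * real n - 1) * (2 * (2 * real n - 1) * c1)"
    unfolding s1 by (simp add: algebra_simps)
  also have "\<dots> = (2 * real n - 1) * ((real n + 1) * cn)" unfolding r1 ..
  finally have "2 * (2 * real n - 1) * S1 = (2 * real n - 1) * ((real n + 1) * cn)" .
  then have "(2 * real n - 1) * (2 * S1) = (2 * real n - 1) * ((real n + 1) * cn)"
    by (simp only: mult_ac)
  then have "2 * S1 = (real n + 1) * cn" using pos by simp
  then have "S1 = (real n + 1) / 2 * cn" by simp
  then have S1U: "S1 / cn = (real n + 1) / 2" using cnp by simp
  have lowsum: "(\<Sum>a\<in>dyck_paths n. (real (pk a) - 1) * (real (pk a) - 2)) = S2 - 2 * S1 + 2 * cn"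
  proof -
    have "(\<Sum>a\<in>dyck_paths n. (real (pk a) - 1) * (real (pk a) - 2)) =
        (\<Sum>a\<in>dyck_paths n. real (pk a) * (real (pk a) - 1) - 2 * real (pk a) + 2)"
      by (intro sum.cong refl) (simp add: algebra_simps)
    also have "\<dots> = S2 - 2 * S1 + 2 * cn"
      by (simp add: S2_def S1_def cn_def sum.distrib sum_subtractf sum_distrib_left)
    finally show ?thesis .
  qed
  have hi: "hasse_index (dyck_paths n) dyck_le 2 = real (sc (dyck_paths n) dyck_le 2) / cn"
    by (simp add: hasse_index_def cn_def)
  have b1: "S2 - 2 * S1 + 2 * cn \<le> real (sc (dyck_paths n) dyck_le 2)"
    using sc_bounds(1)[of n] n lowsum by simp
  have b2: "real (sc (dyck_paths n) dyck_le 2) \<le> S2"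
    using sc_bounds(2)[of n] n by (simp add: S2_def)
  have "(S2 - 2 * S1 + 2 * cn) / cn \<le> real (sc (dyck_paths n) dyck_le 2) / cn"
    using b1 cnp by (simp add: divide_right_mono)
  moreover have "(S2 - 2 * S1 + 2 * cn) / cn = U - real n + 1"
    using S2U S1U cnp by (simp add: diff_divide_distrib add_divide_distrib)
  ultimately show "U - real n + 1 \<le> hasse_index (dyck_paths n) dyck_le 2" using hi by simp
  have "real (sc (dyck_paths n) dyck_le 2) / cn \<le> S2 / cn"
    using b2 cnp by (simp add: divide_right_mono)
  then show "hasse_index (dyck_paths n) dyck_le 2 \<le> U" using hi S2U by simp
qed

theorem mainTheorem5:
  shows "(\<lambda>n. hasse_index (dyck_paths n) dyck_le 2) \<sim>[at_top] (\<lambda>n. real n ^ 2 / 4)"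
proof (rule asymp_equivI')
  define U where "U = (\<lambda>n::nat. (real n - 1) * real n * (real n + 1) / (2 * (2 * real n - 1)))"
  have l1: "((\<lambda>n. (U n - real n + 1) / (real n ^ 2 / 4)) \<longlongrightarrow> 1) at_top"
    unfolding U_def by real_asymp
  have l2: "((\<lambda>n. U n / (real n ^ 2 / 4)) \<longlongrightarrow> 1) at_top"
    unfolding U_def by real_asymp
  show "((\<lambda>n. hasse_index (dyck_paths n) dyck_le 2 / (real n ^ 2 / 4)) \<longlongrightarrow> 1) at_top"
  proof (rule tendsto_sandwich[OF _ _ l1 l2])
    show "\<forall>\<^sub>F n in at_top. (U n - real n + 1) / (real n ^ 2 / 4) \<le> hasse_index (dyck_paths n) dyck_le 2 / (real n ^ 2 / 4)"
      using eventually_ge_at_top[of "2::nat"]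
    proof eventually_elim
      case (elim n)
      have "U n - real n + 1 \<le> hasse_index (dyck_paths n) dyck_le 2"
        unfolding U_def using hasse_bounds(1)[OF elim] by simp
      then show ?case by (rule divide_right_mono) simp
    qed
    show "\<forall>\<^sub>F n in at_top. hasse_index (dyck_paths n) dyck_le 2 / (real n ^ 2 / 4) \<le> U n / (real n ^ 2 / 4)"
      using eventually_ge_at_top[of "2::nat"]
    proof eventually_elim
      case (elim n)
      have "hasse_index (dyck_paths n) dyck_le 2 \<le> U n"
        unfolding U_def using hasse_bounds(2)[OF elim] by simp
      then show ?case by (rule divide_right_mono) simp
    qed
  qed
qed

end
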